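(* Let $L\in(0,\infty]$ and let $\gamma\in C^\infty([0,L),\mathbb{R}^2)$ be an arclength-parameterized plane curve with $\gamma(s)\neq0$ for all $s\in(0,L)$, with signed curvature $\kappa$ and polar tangential angle function $\omega:(0,L)\to\mathbb{R}$. Assume that $(\kappa^2)_s(s)>0$ for every $s\in(0,L)$, and that the origin does not belong to the initial osculating disk $\widetilde D(0)$. Then $\kappa(s)\omega_s(s)>0$ for every $s\in(0,L)$; in particular $\omega$ is strictly monotone on $(0,L)$.
   Context: $T=\gamma_s$, $N=R_{\pi/2}T$ with $R_\theta$ counterclockwise rotation by $\theta$, and $\gamma_{ss}=\kappa N$. With $X:=\gamma/|\gamma|$, a polar tangential angle function is a smooth $\omega:(0,L)\to\mathbb{R}$ with $R_{\omega}X=T$ on $(0,L)$. Under the assumption $(\kappa^2)_s>0$ on $(0,L)$ one has $\kappa(s)\neq0$ for $s\in(0,L)$; for such $s$, $D(s)$ denotes the open disk of radius $1/|\kappa(s)|$ centered at $\gamma(s)+\kappa(s)^{-1}N(s)$ (the disk enclosed by the osculating circle). These disks are nested (decreasing as $s$ increases), and the initial osculating disk is the open set $\widetilde D(0):=\lim_{s\downarrow0}D(s)=\bigcup_{s\in(0,L)}D(s)$. *)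

theory Defs
  imports "HOL-Analysis.Analysis"
begin

text \<open>The plane R^2 is identified with the complex numbers; the counterclockwise
rotation R_theta is multiplication by cis theta, so R_(pi/2) is multiplication by i.\<close>

definition smooth_on_set :: "real set \<Rightarrow> (real \<Rightarrow> 'a::real_normed_vector) \<Rightarrow> bool" where
  "smooth_on_set S f \<longleftrightarrow>
     (\<exists>F :: nat \<Rightarrow> real \<Rightarrow> 'a. F 0 = f \<and>
        (\<forall>k. \<forall>s\<in>S. (F k has_vector_derivative F (Suc k) s) (at s within S)))"

definition param_int :: "ereal \<Rightarrow> real set" where
  "param_int L = {s. 0 \<le> s \<and> ereal s < L}"

definition open_param_int :: "ereal \<Rightarrow> real set" where
  "open_param_int L = {s. 0 < s \<and> ereal s < L}"

definition osc_disk :: "(real \<Rightarrow> complex) \<Rightarrow> (real \<Rightarrow> complex) \<Rightarrow> (real \<Rightarrow> real) \<Rightarrow> real \<Rightarrow> complex set" where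
  "osc_disk \<gamma> T \<kappa> s = ball (\<gamma> s + of_real (1 / \<kappa> s) * (\<i> * T s)) (1 / \<bar>\<kappa> s\<bar>)"

definition init_osc_disk :: "ereal \<Rightarrow> (real \<Rightarrow> complex) \<Rightarrow> (real \<Rightarrow> complex) \<Rightarrow> (real \<Rightarrow> real) \<Rightarrow> complex set" where
  "init_osc_disk L \<gamma> T \<kappa> = (\<Union>s\<in>open_param_int L. osc_disk \<gamma> T \<kappa> s)"

end

theory Submission
  imports Defs
begin


lemma cis_vd:
  assumes "(f has_real_derivative w) (at x)"
  shows "((\<lambda>t. cis (f t)) has_vector_derivative (of_real w * (\<i> * cis (f x)))) (at x)"
proof -
  have "(f has_derivative (\<lambda>t. w * t)) (at x)" using assms
    by (simp add: has_field_derivative_def)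
  from has_derivative_cis[OF this] show ?thesis
    unfolding has_vector_derivative_def
    by (simp add: scaleR_conv_of_real algebra_simps)
qed

lemma open_opi: "open (open_param_int L)"
proof -
  have "open_param_int L = {0<..} \<inter> (ereal -` {..<L})" by (auto simp: open_param_int_def)
  moreover have "open (ereal -` {..<L})"
    by (rule open_vimage) (auto intro: continuous_intros)
  ultimately show ?thesis by auto
qed

lemma opi_sub: "open_param_int L \<subseteq> param_int L"
  by (auto simp: open_param_int_def param_int_def)

lemma opi_at: assumes "(f has_vector_derivative f') (at s within param_int L)" "s \<in> open_param_int L"
  shows "(f has_vector_derivative f') (at s)"
  using has_vector_derivative_within_subset[OF assms(1) opi_sub] at_within_open[OF assms(2) open_opi]
  by metis


lemma disk_alg:
  fixes g :: complex and w k r :: real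
  assumes g: "g \<noteq> 0" and r: "r = norm g" and k: "k \<noteq> 0"
    and n: "norm (g + of_real (1/k) * (\<i> * (cis w * (g / of_real r)))) \<ge> 1 / \<bar>k\<bar>"
  shows "r * k\<^sup>2 \<ge> 2 * k * sin w"
proof -
  have rp: "r > 0" using g r by auto
  define z where "z = 1 + \<i> * cis w / of_real (k * r)"
  have eq: "g + of_real (1/k) * (\<i> * (cis w * (g / of_real r))) = g * z"
    using rp k by (simp add: z_def field_simps)
  have nz: "(norm z)\<^sup>2 = 1 - 2 * sin w / (k*r) + 1 / (k*r)\<^sup>2"
  proof -
    have "z = Complex (1 - sin w / (k*r)) (cos w / (k*r))"
      unfolding z_def by (simp add: complex_eq_iff cis.sel Re_divide Im_divide power2_eq_square field_simps)
    then have "(norm z)\<^sup>2 = (1 - sin w / (k*r))\<^sup>2 + (cos w / (k*r))\<^sup>2"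
      by (simp add: cmod_power2)
    also have "\<dots> = 1 - 2 * sin w / (k*r) + ((sin w)\<^sup>2 + (cos w)\<^sup>2) / (k*r)\<^sup>2"
      using rp k by (simp add: power2_eq_square field_simps)
    finally show ?thesis by simp
  qed
  have "(1 / \<bar>k\<bar>)\<^sup>2 \<le> (norm (g * z))\<^sup>2"
    using n eq by (intro power_mono) auto
  also have "\<dots> = r\<^sup>2 * (norm z)\<^sup>2" by (simp add: norm_mult power_mult_distrib r)
  also have "\<dots> = r\<^sup>2 - 2 * r * sin w / k + 1 / k\<^sup>2"
    unfolding nz using rp k by (simp add: power2_eq_square field_simps)
  finally have "1 / k\<^sup>2 \<le> r\<^sup>2 - 2 * r * sin w / k + 1 / k\<^sup>2"
    by (simp add: power_divide abs_power2 power_abs)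
  then have "2 * r * sin w / k \<le> r\<^sup>2" by simp
  then have "2 * r * sin w / k * (k\<^sup>2 / r) \<le> r\<^sup>2 * (k\<^sup>2 / r)"
    using rp by (intro mult_right_mono) auto
  then show ?thesis using rp k by (simp add: power2_eq_square field_simps)
qed

theorem corollary2p6:
  fixes L :: ereal
    and \<gamma> T :: "real \<Rightarrow> complex"
    and \<kappa> \<omega> :: "real \<Rightarrow> real"
  assumes L_pos: "L > 0"
    and smooth: "smooth_on_set (param_int L) \<gamma>"
    and T_deriv: "\<And>s. s \<in> param_int L \<Longrightarrow> (\<gamma> has_vector_derivative T s) (at s within param_int L)"
    and arclength: "\<And>s. s \<in> param_int L \<Longrightarrow> norm (T s) = 1"
    and curvature: "\<And>s. s \<in> param_int L \<Longrightarrow>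
           (T has_vector_derivative (of_real (\<kappa> s) * (\<i> * T s))) (at s within param_int L)"
    and nonzero: "\<And>s. s \<in> open_param_int L \<Longrightarrow> \<gamma> s \<noteq> 0"
    and omega_smooth: "smooth_on_set (open_param_int L) \<omega>"
    and omega_polar: "\<And>s. s \<in> open_param_int L \<Longrightarrow> cis (\<omega> s) * (\<gamma> s / of_real (norm (\<gamma> s))) = T s"
    and kappa2_incr: "\<And>s. s \<in> open_param_int L \<Longrightarrow> deriv (\<lambda>t. (\<kappa> t)\<^sup>2) s > 0"
    and origin: "0 \<notin> init_osc_disk L \<gamma> T \<kappa>"
  shows "(\<forall>s\<in>open_param_int L. \<kappa> s * deriv \<omega> s > 0) \<and>
         ((\<forall>s\<in>open_param_int L. \<forall>t\<in>open_param_int L. s < t \<longrightarrow> \<omega> s < \<omega> t) \<or>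
          (\<forall>s\<in>open_param_int L. \<forall>t\<in>open_param_int L. s < t \<longrightarrow> \<omega> s > \<omega> t))"
proof -
  define Ip where "Ip = open_param_int L"
  have oIp: "open Ip" unfolding Ip_def by (rule open_opi)
  obtain F where F0: "F 0 = \<gamma>" and Fd: "\<And>k s. s \<in> param_int L \<Longrightarrow> (F k has_vector_derivative F (Suc k) s) (at s within param_int L)"
    using smooth unfolding smooth_on_set_def by blast
  obtain G where G0: "G 0 = \<omega>" and Gd: "\<And>k s. s \<in> Ip \<Longrightarrow> (G k has_vector_derivative G (Suc k) s) (at s within Ip)"
    using omega_smooth unfolding smooth_on_set_def Ip_def by blast
  have Fa: "(F k has_vector_derivative F (Suc k) s) (at s)" if "s \<in> Ip" for k s
    using opi_at[OF Fd that[unfolded Ip_def]] that opi_sub unfolding Ip_def by blast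
  have Ga: "(G k has_vector_derivative G (Suc k) s) (at s)" if "s \<in> Ip" for k s
    using Gd[OF that] at_within_open[OF that oIp] by metis
  have OP: "s \<in> param_int L" if "s \<in> Ip" for s using that opi_sub unfolding Ip_def by blast
  have Ta: "(\<gamma> has_vector_derivative T s) (at s)" if "s \<in> Ip" for s
    using opi_at[OF T_deriv[OF OP[OF that]]] that unfolding Ip_def by blast
  have ka: "(T has_vector_derivative (of_real (\<kappa> s) * (\<i> * T s))) (at s)" if "s \<in> Ip" for s
    using opi_at[OF curvature[OF OP[OF that]]] that unfolding Ip_def by blast
  have TF: "T s = F 1 s" if "s \<in> Ip" for s
    using vector_derivative_unique_at[OF Ta[OF that]] Fa[OF that, of 0] F0 by simp
  have kF: "of_real (\<kappa> s) * (\<i> * T s) = F 2 s" if "s \<in> Ip" for s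
  proof -
    have "(F 1 has_vector_derivative (of_real (\<kappa> s) * (\<i> * T s))) (at s)"
      by (rule has_vector_derivative_transform_within_open[OF ka[OF that] oIp that]) (simp add: TF)
    from vector_derivative_unique_at[OF this Fa[OF that, of 1]] show ?thesis by (simp add: numeral_2_eq_2)
  qed
  have TT: "T s * cnj (T s) = 1" if "s \<in> Ip" for s
    using complex_norm_square[of "T s"] arclength[OF OP[OF that]] by simp
  have kIm: "\<kappa> s = Im (F 2 s * cnj (F 1 s))" if "s \<in> Ip" for s
  proof -
    have "F 2 s * cnj (F 1 s) = \<i> * of_real (\<kappa> s) * (T s * cnj (T s))"
      using kF[OF that] TF[OF that] by (metis mult.assoc mult.left_commute)
    then show ?thesis using TT[OF that] by simp
  qed
  have kD: "\<exists>K. (\<kappa> has_real_derivative K) (at s)" if "s \<in> Ip" for s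
  proof -
    have "((\<lambda>t. F 2 t * cnj (F 1 t)) has_vector_derivative (F 2 s * cnj (F (Suc 1) s) + F (Suc 2) s * cnj (F 1 s))) (at s)"
      by (intro has_vector_derivative_mult has_vector_derivative_cnj Fa that)
    then have "((\<lambda>t. Im (F 2 t * cnj (F 1 t))) has_real_derivative Im (F 2 s * cnj (F (Suc 1) s) + F (Suc 2) s * cnj (F 1 s))) (at s)"
      by (rule has_field_derivative_Im)
    then have "(\<kappa> has_real_derivative Im (F 2 s * cnj (F (Suc 1) s) + F (Suc 2) s * cnj (F 1 s))) (at s)"
      unfolding has_real_derivative_iff_has_vector_derivative
      by (rule has_vector_derivative_transform_within_open[OF _ oIp that]) (simp add: kIm)
    then show ?thesis by blast
  qed
  have knz: "\<kappa> s \<noteq> 0" if sI: "s \<in> Ip" for s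
  proof
    assume k0: "\<kappa> s = 0"
    obtain K where K: "(\<kappa> has_real_derivative K) (at s)" using kD[OF sI] by blast
    have "((\<lambda>t. (\<kappa> t)\<^sup>2) has_real_derivative 0) (at s)"
      using K k0 by (auto intro!: derivative_eq_intros)
    then have "deriv (\<lambda>t. (\<kappa> t)\<^sup>2) s = 0" by (simp add: DERIV_imp_deriv)
    then show False using kappa2_incr[of s] that unfolding Ip_def by simp
  qed
  have wD: "(\<omega> has_real_derivative G 1 s) (at s)" if "s \<in> Ip" for s
    using Ga[OF that, of 0] G0 by (simp add: has_real_derivative_iff_has_vector_derivative)
  have wd: "deriv \<omega> s = G 1 s" if "s \<in> Ip" for s using wD[OF that] by (rule DERIV_imp_deriv)
  have Acis: "T t * cnj (\<gamma> t) = cis (\<omega> t) * of_real (norm (\<gamma> t))" if "t \<in> Ip" for t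
  proof -
    have g0: "\<gamma> t \<noteq> 0" using nonzero that unfolding Ip_def by blast
    have "T t * cnj (\<gamma> t) = cis (\<omega> t) * (\<gamma> t * cnj (\<gamma> t)) / of_real (norm (\<gamma> t))"
    proof -
      have e: "T t = cis (\<omega> t) * (\<gamma> t / of_real (norm (\<gamma> t)))"
        using omega_polar[of t] that unfolding Ip_def by simp
      show ?thesis unfolding e by (simp only: divide_inverse mult_ac)
    qed
    also have "\<dots> = cis (\<omega> t) * of_real (norm (\<gamma> t))"
      unfolding complex_norm_square[symmetric] using g0 by (simp add: power2_eq_square)
    finally show ?thesis .
  qed
  have rel: "T t * cnj (\<gamma> t) * cis (- \<omega> t) = of_real (norm (\<gamma> t))" if "t \<in> Ip" for t
  proof -
    have "T t * cnj (\<gamma> t) * cis (- \<omega> t) = (cis (\<omega> t) * cis (- \<omega> t)) * of_real (norm (\<gamma> t))"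
      using Acis[OF that] by (simp add: ac_simps)
    also have "\<dots> = of_real (norm (\<gamma> t))" by (simp add: cis_mult)
    finally show ?thesis .
  qed
  have key: "G 1 s * norm (\<gamma> s) = \<kappa> s * norm (\<gamma> s) - sin (\<omega> s)" if sI: "s \<in> Ip" for s
  proof -
    define P' where "P' = T s * cnj (\<gamma> s) * (of_real (- G 1 s) * (\<i> * cis (- \<omega> s))) + (T s * cnj (T s) + of_real (\<kappa> s) * (\<i> * T s) * cnj (\<gamma> s)) * cis (- \<omega> s)"
    have D: "((\<lambda>t. T t * cnj (\<gamma> t) * cis (- \<omega> t)) has_vector_derivative P') (at s)"
      unfolding P'_def
      by (intro has_vector_derivative_mult has_vector_derivative_cnj cis_vd DERIV_minus wD ka Ta sI)
    have D1: "((\<lambda>t. Im (T t * cnj (\<gamma> t) * cis (- \<omega> t))) has_real_derivative Im P') (at s)"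
      by (rule has_field_derivative_Im[OF D])
    have D2: "((\<lambda>t. Im (T t * cnj (\<gamma> t) * cis (- \<omega> t))) has_real_derivative 0) (at s)"
      unfolding has_real_derivative_iff_has_vector_derivative
      by (rule has_vector_derivative_transform_within_open[OF has_vector_derivative_const oIp sI])
         (simp add: rel)
    have Im0: "Im P' = 0" using DERIV_unique[OF D1 D2] .
    have "P' = of_real (- G 1 s * norm (\<gamma> s)) * \<i> * (cis (\<omega> s) * cis (- \<omega> s)) + cis (- \<omega> s)
       + of_real (\<kappa> s * norm (\<gamma> s)) * \<i> * (cis (\<omega> s) * cis (- \<omega> s))"
      unfolding P'_def using Acis[OF sI] TT[OF sI]
      by (simp add: algebra_simps)
    also have "\<dots> = of_real (- G 1 s * norm (\<gamma> s)) * \<i> + cis (- \<omega> s) + of_real (\<kappa> s * norm (\<gamma> s)) * \<i>"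
      by (simp add: cis_mult)
    finally have "Im P' = - G 1 s * norm (\<gamma> s) - sin (\<omega> s) + \<kappa> s * norm (\<gamma> s)"
      by simp
    then show ?thesis using Im0 by simp
  qed
  have pos: "\<kappa> s * G 1 s > 0" if sI: "s \<in> Ip" for s
  proof -
    have g0: "\<gamma> s \<noteq> 0" using nonzero sI unfolding Ip_def by blast
    then have rp: "norm (\<gamma> s) > 0" by simp
    have k0: "\<kappa> s \<noteq> 0" by (rule knz[OF sI])
    have "0 \<notin> osc_disk \<gamma> T \<kappa> s" using origin sI unfolding init_osc_disk_def Ip_def by blast
    then have "norm (\<gamma> s + of_real (1 / \<kappa> s) * (\<i> * T s)) \<ge> 1 / \<bar>\<kappa> s\<bar>"
      unfolding osc_disk_def by (simp add: dist_norm)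
    moreover have "T s = cis (\<omega> s) * (\<gamma> s / of_real (norm (\<gamma> s)))"
      using omega_polar[of s] sI unfolding Ip_def by simp
    ultimately have "norm (\<gamma> s + of_real (1 / \<kappa> s) * (\<i> * (cis (\<omega> s) * (\<gamma> s / of_real (norm (\<gamma> s)))))) \<ge> 1 / \<bar>\<kappa> s\<bar>"
      by simp
    from disk_alg[OF g0 refl k0 this]
    have A: "norm (\<gamma> s) * (\<kappa> s)\<^sup>2 \<ge> 2 * (\<kappa> s * sin (\<omega> s))" by simp
    have B: "norm (\<gamma> s) * (\<kappa> s)\<^sup>2 > 0" using rp k0 by simp
    have C: "(\<kappa> s * G 1 s) * norm (\<gamma> s) = norm (\<gamma> s) * (\<kappa> s)\<^sup>2 - \<kappa> s * sin (\<omega> s)"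
    proof -
      have "\<kappa> s * (G 1 s * norm (\<gamma> s)) = \<kappa> s * (\<kappa> s * norm (\<gamma> s) - sin (\<omega> s))"
        using key[OF sI] by simp
      then show ?thesis by (simp add: algebra_simps power2_eq_square)
    qed
    have "(\<kappa> s * G 1 s) * norm (\<gamma> s) > 0" unfolding C using A B by linarith
    then show ?thesis using rp by (simp add: zero_less_mult_iff)
  qed
  have Iint: "z \<in> Ip" if "x \<in> Ip" "y \<in> Ip" "x \<le> z" "z \<le> y" for x y z
    using that unfolding Ip_def open_param_int_def
    by (auto intro: le_less_trans[of "ereal z" "ereal y" L])
  have cont: "continuous_on Ip (G 1)"
    using Ga[of _ 1] by (meson continuous_at_imp_continuous_on has_vector_derivative_continuous)
  have conn: "connected (G 1 ` Ip)"
    by (rule connected_continuous_image[OF cont]) (auto simp: connected_iff_interval intro: Iint)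
  have G1nz: "G 1 s \<noteq> 0" if "s \<in> Ip" for s using pos[OF that] by auto
  have sign: "(\<forall>s\<in>Ip. G 1 s > 0) \<or> (\<forall>s\<in>Ip. G 1 s < 0)"
  proof (rule ccontr)
    assume "\<not> ?thesis"
    then obtain a b where a: "a \<in> Ip" "G 1 a < 0" and b: "b \<in> Ip" "G 1 b > 0"
      using G1nz by (meson linorder_neqE_linordered_idom)
    have "0 \<in> G 1 ` Ip"
      using conn a b unfolding connected_iff_interval
      by (metis image_eqI less_imp_le)
    then show False using G1nz by auto
  qed
  have mvt: "\<exists>z\<in>Ip. \<omega> t - \<omega> s = (t - s) * G 1 z" if "s \<in> Ip" "t \<in> Ip" "s < t" for s t
  proof -
    have "\<exists>z. s < z \<and> z < t \<and> \<omega> t - \<omega> s = (t - s) * G 1 z"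
      by (rule MVT2[OF \<open>s < t\<close>]) (intro wD Iint[OF that(1,2)], auto)
    then show ?thesis using Iint[OF that(1,2)] by (meson less_imp_le)
  qed
  show ?thesis
  proof (intro conjI)
    show "\<forall>s\<in>open_param_int L. \<kappa> s * deriv \<omega> s > 0" using pos wd unfolding Ip_def by simp
    show "(\<forall>s\<in>open_param_int L. \<forall>t\<in>open_param_int L. s < t \<longrightarrow> \<omega> s < \<omega> t) \<or>
          (\<forall>s\<in>open_param_int L. \<forall>t\<in>open_param_int L. s < t \<longrightarrow> \<omega> s > \<omega> t)"
      using sign
    proof
      assume h: "\<forall>s\<in>Ip. G 1 s > 0"
      have "\<omega> s < \<omega> t" if "s \<in> Ip" "t \<in> Ip" "s < t" for s t
        using mvt[OF that] h that(3) by (metis diff_gt_0_iff_gt mult_pos_pos)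
      then show ?thesis unfolding Ip_def by blast
    next
      assume h: "\<forall>s\<in>Ip. G 1 s < 0"
      have "\<omega> s > \<omega> t" if "s \<in> Ip" "t \<in> Ip" "s < t" for s t
        using mvt[OF that] h that(3) by (metis diff_gt_0_iff_gt diff_less_0_iff_less mult_pos_neg)
      then show ?thesis unfolding Ip_def by blast
    qed
  qed
qed

end
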